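(* Let $d\ge0$ and $\alpha_i\in(0,1/i]$ for every $i\in\{1,\dots,d+1\}$, and consider $P=\mathbb Z_{\ge0}^{d+1}$. Then for every $v\in P$ and every integer $t\ge0$, $$\sum_{u\in L_t}p(u\to v)\le1.$$
   Context: Finite model: $P=\mathbb{Z}_{\ge0}^{d+1}$ with $u\le v$ iff $v-u\in\mathbb{Z}_{\ge0}^{d+1}$; $L_t$ = tuples with coordinate sum $t$; $\mathfrak p(v)$ = set of elements covered by $v$, so $|\mathfrak p(v)|$ is the number of positive coordinates of $v$. Path weights: each covering pair $u\lessdot v$ gives a directed edge $u\to v$ of weight $\alpha_{|\mathfrak p(v)|}$; for $u,v\in P$, $p(u\to v)$ is the sum over all directed paths (saturated chains) from $u$ to $v$ of the product of edge weights, with $p(v\to v)=1$ and $p(u\to v)=0$ if $u\not\le v$. *)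

theory Defs
  imports Complex_Main
begin

text \<open>Elements of P = Z_{>=0}^{d+1} are represented as lists of naturals of length d+1.\<close>

definition lattice_pts :: "nat \<Rightarrow> nat list set" where
  "lattice_pts d = {x. length x = d + 1}"

definition level :: "nat \<Rightarrow> nat \<Rightarrow> nat list set" where
  "level d t = {x. length x = d + 1 \<and> sum_list x = t}"

definition covers :: "nat list \<Rightarrow> nat list \<Rightarrow> bool" where
  "covers u v \<longleftrightarrow> length v = length u \<and> (\<exists>i < length u. v = u[i := u ! i + 1])"

definition npos :: "nat list \<Rightarrow> nat" where
  "npos v = card {i. i < length v \<and> v ! i > 0}"

definition sat_chains :: "nat list \<Rightarrow> nat list \<Rightarrow> nat list list set" where
  "sat_chains u v = {xs. xs \<noteq> [] \<and> hd xs = u \<and> last xs = v \<and>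
      (\<forall>i. Suc i < length xs \<longrightarrow> covers (xs ! i) (xs ! Suc i))}"

definition chain_weight :: "(nat \<Rightarrow> real) \<Rightarrow> nat list list \<Rightarrow> real" where
  "chain_weight \<alpha> xs = (\<Prod>i < length xs - 1. \<alpha> (npos (xs ! Suc i)))"

definition path_weight :: "(nat \<Rightarrow> real) \<Rightarrow> nat list \<Rightarrow> nat list \<Rightarrow> real" where
  "path_weight \<alpha> u v = (\<Sum>xs \<in> sat_chains u v. chain_weight \<alpha> xs)"

end

theory Submission
  imports Defs
begin

lemma covers_sum: "covers w v \<Longrightarrow> sum_list v = sum_list w + 1 \<and> length v = length w"
  unfolding covers_def by (auto simp: sum_list_update)

lemma chain_elems:
  assumes "xs \<in> sat_chains u v"
  shows "j < length xs \<Longrightarrow> length (xs!j) = length u \<and> sum_list (xs!j) = sum_list u + j"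
proof (induction j)
  case 0 then show ?case using assms by (auto simp: sat_chains_def hd_conv_nth)
next
  case (Suc j)
  then have "covers (xs!j) (xs!Suc j)" using assms by (auto simp: sat_chains_def)
  then show ?case using Suc covers_sum by fastforce
qed

lemma chain_len:
  assumes "xs \<in> sat_chains u v"
  shows "length v = length u \<and> sum_list v = sum_list u + (length xs - 1)"
proof -
  have ne: "xs \<noteq> []" and l: "last xs = v" using assms by (auto simp: sat_chains_def)
  then have "v = xs ! (length xs - 1)" by (simp add: last_conv_nth)
  then show ?thesis using chain_elems[OF assms, of "length xs - 1"] ne by simp
qed

lemma chain_finite: "finite (sat_chains u w)"
proof -
  let ?B = "{x. set x \<subseteq> {0..sum_list w} \<and> length x = length u}"
  have fB: "finite ?B" by (rule finite_lists_length_eq) simp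
  have "sat_chains u w \<subseteq> {xs. set xs \<subseteq> ?B \<and> length xs \<le> sum_list w + 1}"
  proof
    fix xs assume xs: "xs \<in> sat_chains u w"
    have L: "length w = length u \<and> sum_list w = sum_list u + (length xs - 1)" by (rule chain_len[OF xs])
    have "set xs \<subseteq> ?B"
    proof
      fix x assume "x \<in> set xs"
      then obtain j where j: "j < length xs" "x = xs!j" by (auto simp: in_set_conv_nth)
      have E: "length x = length u \<and> sum_list x = sum_list u + j" using chain_elems[OF xs j(1)] j by simp
      have "sum_list x \<le> sum_list w" using E L j by simp
      then have "set x \<subseteq> {0..sum_list w}" using member_le_sum_list[of _ x] by fastforce
      then show "x \<in> ?B" using E by simp
    qed
    moreover have "length xs \<le> sum_list w + 1" using L by simp
    ultimately show "xs \<in> {xs. set xs \<subseteq> ?B \<and> length xs \<le> sum_list w + 1}" by simp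
  qed
  then show ?thesis using finite_lists_length_le[OF fB] finite_subset by blast
qed

lemma chain_self: "sat_chains v v = {[v]}"
proof
  show "sat_chains v v \<subseteq> {[v]}"
  proof
    fix xs assume xs: "xs \<in> sat_chains v v"
    have "xs \<noteq> []" using xs by (auto simp: sat_chains_def)
    then have "length xs = 1" using chain_len[OF xs] by (cases xs) auto
    then show "xs \<in> {[v]}" using xs by (cases xs) (auto simp: sat_chains_def)
  qed
qed (auto simp: sat_chains_def)

lemma pw_self: "path_weight \<alpha> v v = 1"
  by (simp add: path_weight_def chain_self chain_weight_def)

lemma pw_lt: "sum_list v < sum_list u \<Longrightarrow> path_weight \<alpha> u v = 0"
proof -
  assume a: "sum_list v < sum_list u"
  have "sat_chains u v = {}" using chain_len a by fastforce
  then show ?thesis by (simp add: path_weight_def)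
qed

lemma cw_snoc:
  assumes "ys \<noteq> []"
  shows "chain_weight \<alpha> (ys @ [v]) = chain_weight \<alpha> ys * \<alpha> (npos v)"
proof -
  obtain n where n: "length ys = Suc n" using assms by (cases ys) auto
  have "chain_weight \<alpha> (ys @ [v]) = (\<Prod>i < Suc n. \<alpha> (npos ((ys@[v]) ! Suc i)))"
    by (simp add: chain_weight_def n)
  also have "\<dots> = (\<Prod>i < n. \<alpha> (npos ((ys@[v]) ! Suc i))) * \<alpha> (npos v)"
    using n by (simp add: nth_append)
  also have "(\<Prod>i < n. \<alpha> (npos ((ys@[v]) ! Suc i))) = (\<Prod>i < n. \<alpha> (npos (ys ! Suc i)))"
    using n by (intro prod.cong) (auto simp: nth_append)
  also have "\<dots> = chain_weight \<alpha> ys" by (simp add: chain_weight_def n)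
  finally show ?thesis .
qed

lemma covers_inv: "covers w v \<Longrightarrow> \<exists>i < length v. w = v[i := v!i - 1] \<and> 0 < v!i"
  unfolding covers_def
proof (elim conjE exE)
  fix i assume "length v = length w" "i < length w" "v = w[i := w ! i + 1]"
  then show ?thesis by (intro exI[of _ i]) (auto simp: list_update_overwrite)
qed

lemma covers_set_finite: "finite {w. covers w v}"
proof -
  have "{w. covers w v} \<subseteq> (\<lambda>i. v[i := v!i - 1]) ` {..<length v}" using covers_inv by fastforce
  then show ?thesis by (rule finite_subset) simp
qed

lemma chains_decomp:
  assumes "u \<noteq> v"
  shows "sat_chains u v = (\<Union>w\<in>{w. covers w v}. (\<lambda>ys. ys @ [v]) ` sat_chains u w)"
proof
  show "sat_chains u v \<subseteq> (\<Union>w\<in>{w. covers w v}. (\<lambda>ys. ys @ [v]) ` sat_chains u w)"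
  proof
    fix xs assume xs: "xs \<in> sat_chains u v"
    then have ne: "xs \<noteq> []" and h: "hd xs = u" and l: "last xs = v"
      and c: "\<And>i. Suc i < length xs \<Longrightarrow> covers (xs ! i) (xs ! Suc i)" by (auto simp: sat_chains_def)
    have len: "length xs \<ge> 2"
    proof (rule ccontr)
      assume nl: "\<not> ?thesis" have "length xs > 0" using ne by simp
      then have "length xs = 1" using nl by linarith
      then have "hd xs = last xs" by (cases xs) (auto simp: length_Suc_conv)
      then show False using h l assms by simp
    qed
    define ys where "ys = butlast xs"
    have xs_eq: "xs = ys @ [v]" using ne l unfolding ys_def by (metis append_butlast_last_id)
    have lys: "length ys = length xs - 1" by (simp add: ys_def)
    have yne: "ys \<noteq> []" using len lys by auto
    have "ys \<in> sat_chains u (last ys)"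
      unfolding sat_chains_def
    proof (intro CollectI conjI allI impI)
      show "ys \<noteq> []" by fact
      show "hd ys = u" using h xs_eq yne by simp
      show "last ys = last ys" ..
      fix i assume "Suc i < length ys"
      then show "covers (ys ! i) (ys ! Suc i)" using c[of i] xs_eq by (simp add: nth_append)
    qed
    moreover have "covers (last ys) v"
    proof -
      have "Suc (length ys - 1) < length xs" using yne xs_eq by simp
      then have "covers (xs ! (length ys - 1)) (xs ! Suc (length ys - 1))" by (rule c)
      then show ?thesis using yne xs_eq by (simp add: nth_append last_conv_nth)
    qed
    ultimately show "xs \<in> (\<Union>w\<in>{w. covers w v}. (\<lambda>ys. ys @ [v]) ` sat_chains u w)"
      using xs_eq by blast
  qed
next
  show "(\<Union>w\<in>{w. covers w v}. (\<lambda>ys. ys @ [v]) ` sat_chains u w) \<subseteq> sat_chains u v"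
  proof clarify
    fix w ys assume cv: "covers w v" and ys: "ys \<in> sat_chains u w"
    then have ne: "ys \<noteq> []" and h: "hd ys = u" and l: "last ys = w"
      and c: "\<And>i. Suc i < length ys \<Longrightarrow> covers (ys ! i) (ys ! Suc i)" by (auto simp: sat_chains_def)
    show "ys @ [v] \<in> sat_chains u v"
      unfolding sat_chains_def
    proof (intro CollectI conjI allI impI)
      show "ys @ [v] \<noteq> []" by simp
      show "hd (ys @ [v]) = u" using h ne by simp
      show "last (ys @ [v]) = v" by simp
      fix i assume i: "Suc i < length (ys @ [v])"
      show "covers ((ys @ [v]) ! i) ((ys @ [v]) ! Suc i)"
      proof (cases "Suc i < length ys")
        case True then show ?thesis using c by (simp add: nth_append)
      next
        case False
        then have si: "Suc i = length ys" using i by simp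
        then have "ys ! i = w" using l ne by (metis diff_Suc_1 last_conv_nth)
        then show ?thesis using cv si by (simp add: nth_append)
      qed
    qed
  qed
qed

lemma pw_step:
  assumes "u \<noteq> v"
  shows "path_weight \<alpha> u v = \<alpha> (npos v) * (\<Sum>w\<in>{w. covers w v}. path_weight \<alpha> u w)"
proof -
  have "path_weight \<alpha> u v = (\<Sum>w\<in>{w. covers w v}. \<Sum>xs\<in>(\<lambda>ys. ys @ [v]) ` sat_chains u w. chain_weight \<alpha> xs)"
    unfolding path_weight_def chains_decomp[OF assms]
    proof (rule sum.UNION_disjoint)
    show "finite {w. covers w v}" by (rule covers_set_finite)
    show "\<forall>w\<in>{w. covers w v}. finite ((\<lambda>ys. ys @ [v]) ` sat_chains u w)" by (simp add: chain_finite)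
  qed (auto simp: sat_chains_def)
  also have "\<dots> = (\<Sum>w\<in>{w. covers w v}. \<Sum>ys\<in>sat_chains u w. chain_weight \<alpha> (ys @ [v]))"
    proof (rule sum.cong[OF refl])
    fix w show "sum (chain_weight \<alpha>) ((\<lambda>ys. ys @ [v]) ` sat_chains u w) = (\<Sum>ys\<in>sat_chains u w. chain_weight \<alpha> (ys @ [v]))"
      by (subst sum.reindex) (auto simp: inj_on_def)
  qed
  also have "\<dots> = (\<Sum>w\<in>{w. covers w v}. \<Sum>ys\<in>sat_chains u w. \<alpha> (npos v) * chain_weight \<alpha> ys)"
    by (intro sum.cong refl) (auto simp: cw_snoc sat_chains_def)
  also have "\<dots> = \<alpha> (npos v) * (\<Sum>w\<in>{w. covers w v}. path_weight \<alpha> u w)"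
    by (simp add: path_weight_def sum_distrib_left)
  finally show ?thesis .
qed

lemma pw_le0: "sum_list v \<le> sum_list u \<Longrightarrow> u \<noteq> v \<Longrightarrow> path_weight \<alpha> u v = 0"
proof -
  assume a: "sum_list v \<le> sum_list u" "u \<noteq> v"
  have "sat_chains u v = {}"
  proof (rule ccontr)
    assume "sat_chains u v \<noteq> {}"
    then obtain xs where xs: "xs \<in> sat_chains u v" by blast
    then have ne: "xs \<noteq> []" and "hd xs = u" "last xs = v" by (auto simp: sat_chains_def)
    have "length xs - 1 = 0" using chain_len[OF xs] a by simp
    then have "length xs = 1" using ne by (cases xs) auto
    then have "hd xs = last xs" by (cases xs) (auto simp: length_Suc_conv)
    then show False using \<open>hd xs = u\<close> \<open>last xs = v\<close> a by simp
  qed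
  then show ?thesis by (simp add: path_weight_def)
qed

lemma level_finite: "finite (level d t)"
proof -
  have "level d t \<subseteq> {xs. set xs \<subseteq> {0..t} \<and> length xs = d + 1}"
    unfolding level_def using member_le_sum_list[where ?'a = nat] by fastforce
  then show ?thesis by (rule finite_subset) (rule finite_lists_length_eq, simp)
qed

lemma card_covers: "card {w. covers w v} \<le> npos v"
proof -
  have "{w. covers w v} \<subseteq> (\<lambda>i. v[i := v!i - 1]) ` {i. i < length v \<and> v ! i > 0}"
    using covers_inv by fastforce
  then have "card {w. covers w v} \<le> card ((\<lambda>i. v[i := v!i - 1]) ` {i. i < length v \<and> v ! i > 0})"
    by (rule card_mono[rotated]) simp
  also have "\<dots> \<le> card {i. i < length v \<and> v ! i > 0}" by (rule card_image_le) simp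
  finally show ?thesis by (simp add: npos_def)
qed

lemma npos_bounds:
  assumes "sum_list v > 0"
  shows "1 \<le> npos v \<and> npos v \<le> length v"
proof -
  obtain x where "x \<in> set v" "x \<noteq> 0" using assms by (metis sum_list_eq_0_iff not_less0 neq0_conv)
  then obtain i where i: "i < length v" "v ! i > 0" by (auto simp: in_set_conv_nth)
  have "{i. i < length v \<and> v ! i > 0} \<noteq> {}" using i by blast
  moreover have "{i. i < length v \<and> v ! i > 0} \<subseteq> {..<length v}" by auto
  ultimately show ?thesis unfolding npos_def
    by (metis (no_types, lifting) One_nat_def Suc_leI card_gt_0_iff card_lessThan card_mono finite_lessThan finite_subset)
qed

lemma main_aux:
  fixes \<alpha> :: "nat \<Rightarrow> real"
  assumes A: "\<forall>i \<in> {1..d+1}. 0 < \<alpha> i \<and> \<alpha> i \<le> 1 / real i"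
  shows "length v = d + 1 \<Longrightarrow> sum_list v = n \<Longrightarrow> (\<Sum>u \<in> level d t. path_weight \<alpha> u v) \<le> 1"
proof (induction n arbitrary: v rule: less_induct)
  case (less n v)
  show ?case
  proof (cases "n \<le> t")
    case True
    show ?thesis
    proof (cases "v \<in> level d t")
      case True
      have "(\<Sum>u \<in> level d t. path_weight \<alpha> u v) = path_weight \<alpha> v v + (\<Sum>u \<in> level d t - {v}. path_weight \<alpha> u v)"
        using True level_finite by (simp add: sum.remove)
      also have "(\<Sum>u \<in> level d t - {v}. path_weight \<alpha> u v) = 0"
        using \<open>n \<le> t\<close> less.prems by (intro sum.neutral) (auto simp: level_def intro!: pw_le0)
      finally show ?thesis by (simp add: pw_self)
    next
      case False
      have "(\<Sum>u \<in> level d t. path_weight \<alpha> u v) = 0"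
        using \<open>n \<le> t\<close> less.prems False by (intro sum.neutral) (auto simp: level_def intro!: pw_le0)
      then show ?thesis by simp
    qed
  next
    case False
    let ?W = "{w. covers w v}"
    let ?k = "npos v"
    have kb: "1 \<le> ?k \<and> ?k \<le> d + 1" using npos_bounds[of v] less.prems False by simp
    then have ak: "0 < \<alpha> ?k" "\<alpha> ?k \<le> 1 / real ?k" using A by auto
    have "(\<Sum>u \<in> level d t. path_weight \<alpha> u v) = (\<Sum>u \<in> level d t. \<alpha> ?k * (\<Sum>w\<in>?W. path_weight \<alpha> u w))"
    proof (rule sum.cong[OF refl])
      fix u assume "u \<in> level d t"
      then have "u \<noteq> v" using less.prems False by (auto simp: level_def)
      then show "path_weight \<alpha> u v = \<alpha> ?k * (\<Sum>w\<in>?W. path_weight \<alpha> u w)" by (rule pw_step)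
    qed
    also have "\<dots> = \<alpha> ?k * (\<Sum>w\<in>?W. \<Sum>u \<in> level d t. path_weight \<alpha> u w)"
      by (simp add: sum_distrib_left[symmetric] sum.swap[of _ "level d t"])
    also have "\<dots> \<le> \<alpha> ?k * real (card ?W)"
    proof (rule mult_left_mono)
      show "0 \<le> \<alpha> ?k" using ak by simp
      have "(\<Sum>w\<in>?W. \<Sum>u \<in> level d t. path_weight \<alpha> u w) \<le> (\<Sum>w\<in>?W. 1)"
      proof (rule sum_mono)
        fix w assume "w \<in> ?W"
        then have c: "covers w v" by simp
        then have "sum_list v = sum_list w + 1 \<and> length v = length w" by (rule covers_sum)
        then show "(\<Sum>u \<in> level d t. path_weight \<alpha> u w) \<le> 1"
          using less.IH[of "sum_list w" w] less.prems by simp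
      qed
      then show "(\<Sum>w\<in>?W. \<Sum>u \<in> level d t. path_weight \<alpha> u w) \<le> real (card ?W)" by simp
    qed
    also have "\<dots> \<le> \<alpha> ?k * real ?k"
      using ak card_covers[of v] by (intro mult_left_mono) auto
    also have "\<dots> \<le> 1" using ak kb by (simp add: field_simps)
    finally show ?thesis .
  qed
qed

theorem mainTheorem8:
  fixes d t :: nat and \<alpha> :: "nat \<Rightarrow> real" and v :: "nat list"
  assumes "\<forall>i \<in> {1..d+1}. 0 < \<alpha> i \<and> \<alpha> i \<le> 1 / real i"
    and "v \<in> lattice_pts d"
  shows "(\<Sum>u \<in> level d t. path_weight \<alpha> u v) \<le> 1"
  using main_aux[OF assms(1), of v "sum_list v"] assms(2) by (simp add: lattice_pts_def)

end
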